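(* Let $d \geq 3$ and let $P$ be the Markov kernel on $\mathbb{S}^{d-1} \times \mathcal{B}(\mathbb{S}^{d-1})$ defined by \[ P(x,A) = \frac{1}{2\pi\,\sigma^{(x)}_{d-2}(\mathbb{S}^{d-2}_x)} \int_{\mathbb{S}^{d-2}_x} \int_0^{2\pi} \mathbb{1}_A\big(\cos(\omega)x + \sin(\omega) z\big)\, \mathrm{d}\omega\, \sigma^{(x)}_{d-2}(\mathrm{d}z), \qquad x \in \mathbb{S}^{d-1},\ A \in \mathcal{B}(\mathbb{S}^{d-1}). \] Then $P$ is Wasserstein contractive with rate \[ \rho := \frac{1}{2\pi} \int_0^{2\pi} \sqrt{\cos^2(\omega) + \frac{\sin^2(\omega)}{d-1}}\; \mathrm{d}\omega, \] i.e. $\mathsf{Dob}(P) \leq \rho$.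
   Context: $\mathbb{S}^{d-1} = \{x \in \mathbb{R}^d : \|x\| = 1\}$ with $\|\cdot\|$ the Euclidean norm, equipped with its Borel $\sigma$-algebra. For $x \in \mathbb{S}^{d-1}$, $\mathbb{S}^{d-2}_x := \{z \in \mathbb{S}^{d-1} : x^T z = 0\}$ is the great subsphere w.r.t. $x$ and $\sigma^{(x)}_{d-2}$ is its natural surface measure. The kernel $P$ is the transition kernel of geodesic slice sampling on the sphere for a constant target density: from $x$, pick $z$ uniformly on $\mathbb{S}^{d-2}_x$, then pick $\omega$ uniformly on $[0,2\pi)$ and move to $\cos(\omega)x+\sin(\omega)z$. For probability measures $\xi_1,\xi_2$ on $\mathbb{S}^{d-1}$, $\mathcal{W}(\xi_1,\xi_2) := \inf_{\gamma} \int \|v_1 - v_2\|\,\gamma(\mathrm{d}v_1\times \mathrm{d}v_2)$, the infimum over all couplings $\gamma$ of $\xi_1,\xi_2$. The Dobrushin coefficient is $\mathsf{Dob}(P) := \sup_{x \neq y \in \mathbb{S}^{d-1}} \mathcal{W}(P(x,\cdot),P(y,\cdot))/\|x-y\|$, and $P$ is called Wasserstein contractive with rate $\rho$ if $\mathsf{Dob}(P) \leq \rho < 1$. *)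

theory Defs
  imports "HOL-Analysis.Analysis"
begin

text \<open>Ambient space: a Euclidean space 'a of dimension d = DIM('a).\<close>

abbreviation Sph :: "'a::euclidean_space set" where
  "Sph \<equiv> sphere 0 1"

definition sph_space :: "'a::euclidean_space measure" where
  "sph_space = restrict_space borel Sph"

definition subsph :: "'a::euclidean_space \<Rightarrow> 'a set" where
  "subsph x = {z \<in> Sph. inner x z = 0}"

text \<open>Natural surface measure on the (d-2)-sphere subsph x, defined via the cone
  measure: for A in the (d-1)-dimensional hyperplane orthogonal to x,
  sigma(A) = (d-1) * vol_{d-1}{t z : t in [0,1], z in A}, and the (d-1)-volume of the
  cone equals the d-volume of the cylinder obtained by adding s x, s in [0,1].\<close>
definition cyl :: "'a::euclidean_space \<Rightarrow> 'a set \<Rightarrow> 'a set" where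
  "cyl x A = {t *\<^sub>R z + s *\<^sub>R x | t s z. t \<in> {0..1} \<and> s \<in> {0..1} \<and> z \<in> A}"

definition surf :: "'a::euclidean_space \<Rightarrow> 'a measure" where
  "surf x = measure_of (subsph x) (sets (restrict_space borel (subsph x)))
     (\<lambda>A. ennreal (real DIM('a) - 1) * emeasure lebesgue (cyl x A))"

definition GSS :: "'a::euclidean_space \<Rightarrow> 'a measure" where
  "GSS x = measure_of Sph (sets sph_space)
     (\<lambda>A. ennreal (1 / (2 * pi * measure (surf x) (subsph x))) *
       (\<integral>\<^sup>+ z. (\<integral>\<^sup>+ \<omega>. indicator {0..<2*pi} \<omega> *
           indicator A (cos \<omega> *\<^sub>R x + sin \<omega> *\<^sub>R z) \<partial>lborel) \<partial>surf x))"

definition couplings :: "'a::euclidean_space measure \<Rightarrow> 'a measure \<Rightarrow> ('a \<times> 'a) measure set" where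
  "couplings \<mu> \<nu> = {\<gamma>. sets \<gamma> = sets (sph_space \<Otimes>\<^sub>M sph_space) \<and>
      distr \<gamma> sph_space fst = \<mu> \<and> distr \<gamma> sph_space snd = \<nu>}"

definition wass :: "'a::euclidean_space measure \<Rightarrow> 'a measure \<Rightarrow> ennreal" where
  "wass \<mu> \<nu> = (INF \<gamma> \<in> couplings \<mu> \<nu>. \<integral>\<^sup>+ p. ennreal (norm (fst p - snd p)) \<partial>\<gamma>)"

definition Dob :: "('a::euclidean_space \<Rightarrow> 'a measure) \<Rightarrow> ennreal" where
  "Dob P = (SUP (x, y) \<in> {(x, y). x \<in> Sph \<and> y \<in> Sph \<and> x \<noteq> y}.
              wass (P x) (P y) / ennreal (norm (x - y)))"

definition wass_contractive :: "('a::euclidean_space \<Rightarrow> 'a measure) \<Rightarrow> real \<Rightarrow> bool" where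
  "wass_contractive P \<rho> \<longleftrightarrow> Dob P \<le> ennreal \<rho> \<and> \<rho> < 1"

end

theory Submission
  imports Defs "HOL-Analysis.Analysis"
begin
lemma lborel_transl: "distr lborel borel (\<lambda>x. t + x) = (lborel :: 'a::euclidean_space measure)"
  using lborel_affine[of 1 t] by (simp add: density_1)

lemma lborel_neg: "distr lborel borel (\<lambda>x. - x) = (lborel :: 'a::euclidean_space measure)"
  using lborel_affine[of "-1" "0::'a"] by (simp add: density_1)

lemma orth_borel: "orthogonal_transformation (Q::'a::euclidean_space\<Rightarrow>'a) \<Longrightarrow> Q \<in> borel_measurable borel"
  apply (rule borel_measurable_continuous_onI)
  apply (rule linear_continuous_on)
  using orthogonal_transformation_linear linear_conv_bounded_linear by auto

lemma lborel_orth: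
  fixes Q :: "'a::euclidean_space \<Rightarrow> 'a"
  assumes Q: "orthogonal_transformation Q"
  shows "distr lborel borel Q = lborel"
proof -
  define N where "N = distr lborel borel Q"
  have Qm[measurable]: "Q \<in> borel_measurable borel" using orth_borel[OF Q] .
  have sN[simp, measurable_cong]: "sets N = sets borel" by (simp add: N_def)
  have spN[simp]: "space N = UNIV" by (simp add: N_def)
  have Qnorm: "norm (Q v) = norm v" for v using Q orthogonal_transformation_norm by blast
  have Qlin: "linear Q" using Q orthogonal_transformation_linear by blast
  have pre_cball: "Q -` cball 0 r = cball 0 r" for r using Qnorm by auto
  have N_cball: "emeasure N (cball 0 r) = emeasure lborel (cball (0::'a) r)" for r
    by (simp add: N_def emeasure_distr pre_cball)
  have fin: "emeasure lborel (cball (0::'a) r) \<noteq> \<infinity>" for r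
    by (cases "r \<ge> 0") (auto simp: emeasure_cball)
  have sfN: "sigma_finite_measure N"
  proof
    show "\<exists>A. countable A \<and> A \<subseteq> sets N \<and> \<Union> A = space N \<and> (\<forall>a\<in>A. emeasure N a \<noteq> \<infinity>)"
    proof (intro exI[of _ "range (\<lambda>n::nat. cball (0::'a) (real n))"] conjI)
      show "\<Union> (range (\<lambda>n::nat. cball (0::'a) (real n))) = space N"
      proof -
        have "v \<in> cball 0 (real (nat \<lceil>norm v\<rceil>))" for v :: 'a
          by simp
        thus ?thesis by (auto intro: real_arch_simple)
      qed
    qed (auto simp: N_cball fin[unfolded infinity_ennreal_def])
  qed
  interpret N: sigma_finite_measure N by fact
  interpret pair_sigma_finite lborel N ..
  have transL: "(\<integral>\<^sup>+y. h (t + y) \<partial>lborel) = (\<integral>\<^sup>+y. h y \<partial>lborel)"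
    if [measurable]: "h \<in> borel_measurable borel" for h :: "'a \<Rightarrow> ennreal" and t
  proof -
    have "(\<integral>\<^sup>+y. h y \<partial>lborel) = (\<integral>\<^sup>+y. h y \<partial>distr lborel borel (\<lambda>x. t + x))"
      by (simp add: lborel_transl)
    also have "\<dots> = (\<integral>\<^sup>+y. h (t + y) \<partial>lborel)" by (simp add: nn_integral_distr)
    finally show ?thesis ..
  qed
  have transN: "(\<integral>\<^sup>+y. h (t + y) \<partial>N) = (\<integral>\<^sup>+y. h y \<partial>N)"
    if [measurable]: "h \<in> borel_measurable borel" for h :: "'a \<Rightarrow> ennreal" and t
  proof -
    obtain s where s: "Q s = t"
      using Q orthogonal_transformation_surj by (metis surj_def)
    have "(\<integral>\<^sup>+y. h (t + y) \<partial>N) = (\<integral>\<^sup>+y. h (t + Q y) \<partial>lborel)"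
      by (simp add: N_def nn_integral_distr)
    also have "\<dots> = (\<integral>\<^sup>+y. h (Q (s + y)) \<partial>lborel)"
      using s Qlin by (simp add: linear_add)
    also have "\<dots> = (\<integral>\<^sup>+y. h (Q y) \<partial>lborel)"
      by (rule transL) measurable
    also have "\<dots> = (\<integral>\<^sup>+y. h y \<partial>N)" by (simp add: N_def nn_integral_distr)
    finally show ?thesis .
  qed
  have negN: "(\<integral>\<^sup>+y. h (- y) \<partial>N) = (\<integral>\<^sup>+y. h y \<partial>N)"
    if [measurable]: "h \<in> borel_measurable borel" for h :: "'a \<Rightarrow> ennreal"
  proof -
    have "(\<integral>\<^sup>+y. h (- y) \<partial>N) = (\<integral>\<^sup>+y. h (- Q y) \<partial>lborel)"
      by (simp add: N_def nn_integral_distr)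
    also have "\<dots> = (\<integral>\<^sup>+y. h (Q (- y)) \<partial>lborel)"
      using Qlin by (simp add: linear_neg)
    also have "\<dots> = (\<integral>\<^sup>+y. h (Q y) \<partial>distr lborel borel (\<lambda>x. - x))"
      by (simp add: nn_integral_distr)
    also have "\<dots> = (\<integral>\<^sup>+y. h (Q y) \<partial>lborel)" by (simp add: lborel_neg)
    also have "\<dots> = (\<integral>\<^sup>+y. h y \<partial>N)" by (simp add: N_def nn_integral_distr)
    finally show ?thesis .
  qed
  define b where "b = emeasure lborel (cball (0::'a) 1)"
  have bd: "b = ennreal (unit_ball_vol (real DIM('a)) * 1 ^ DIM('a))"
    unfolding b_def by (rule emeasure_cball) simp
  have pos: "unit_ball_vol (real DIM('a)) > 0" by simp
  have b0: "b \<noteq> 0" "b \<noteq> \<infinity>"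
    using bd pos by (metis ennreal_eq_0_iff not_le power_one mult_1_right) (simp add: bd)
  have main: "emeasure lborel A = emeasure N A" if A[measurable]: "A \<in> sets borel" for A
  proof -
    let ?f = "indicator A :: 'a \<Rightarrow> ennreal"
    let ?g = "indicator (cball (0::'a) 1) :: 'a \<Rightarrow> ennreal"
    have [measurable]: "cball (0::'a) 1 \<in> sets borel" by simp
    define I where "I = (\<integral>\<^sup>+x. \<integral>\<^sup>+y. ?f x * ?g (x + y) \<partial>N \<partial>lborel)"
    have "I = (\<integral>\<^sup>+x. ?f x * b \<partial>lborel)"
      unfolding I_def
    proof (rule nn_integral_cong)
      fix x :: 'a
      have "(\<integral>\<^sup>+y. ?f x * ?g (x + y) \<partial>N) = ?f x * (\<integral>\<^sup>+y. ?g (x + y) \<partial>N)"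
        by (rule nn_integral_cmult) measurable
      also have "(\<integral>\<^sup>+y. ?g (x + y) \<partial>N) = (\<integral>\<^sup>+y. ?g y \<partial>N)"
        by (rule transN) measurable
      also have "\<dots> = b" by (simp add: b_def N_cball)
      finally show "(\<integral>\<^sup>+y. ?f x * ?g (x + y) \<partial>N) = ?f x * b" .
    qed
    also have "\<dots> = emeasure lborel A * b"
      by (simp add: nn_integral_multc)
    finally have I1: "I = emeasure lborel A * b" .
    have "I = (\<integral>\<^sup>+y. \<integral>\<^sup>+x. ?f x * ?g (x + y) \<partial>lborel \<partial>N)"
      unfolding I_def by (rule Fubini'[symmetric]) measurable
    also have "\<dots> = (\<integral>\<^sup>+y. \<integral>\<^sup>+x. ?f (- y + x) * ?g x \<partial>lborel \<partial>N)"
    proof (rule nn_integral_cong)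
      fix y :: 'a
      have "(\<integral>\<^sup>+x. ?f x * ?g (x + y) \<partial>lborel) = (\<integral>\<^sup>+x. ?f (- y + x) * ?g ((- y + x) + y) \<partial>lborel)"
        by (rule transL[symmetric]) measurable
      thus "(\<integral>\<^sup>+x. ?f x * ?g (x + y) \<partial>lborel) = (\<integral>\<^sup>+x. ?f (- y + x) * ?g x \<partial>lborel)"
        by simp
    qed
    also have "\<dots> = (\<integral>\<^sup>+x. \<integral>\<^sup>+y. ?f (- y + x) * ?g x \<partial>N \<partial>lborel)"
      by (rule Fubini') measurable
    also have "\<dots> = (\<integral>\<^sup>+x. emeasure N A * ?g x \<partial>lborel)"
    proof (rule nn_integral_cong)
      fix x :: 'a
      have "(\<integral>\<^sup>+y. ?f (- y + x) * ?g x \<partial>N) = (\<integral>\<^sup>+y. ?f (- y + x) \<partial>N) * ?g x"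
        by (rule nn_integral_multc) measurable
      also have "(\<integral>\<^sup>+y. ?f (- y + x) \<partial>N) = (\<integral>\<^sup>+y. ?f (y + x) \<partial>N)"
        using negN[of "\<lambda>y. ?f (y + x)"] by simp
      also have "\<dots> = (\<integral>\<^sup>+y. ?f (x + y) \<partial>N)" by (simp add: add.commute)
      also have "\<dots> = (\<integral>\<^sup>+y. ?f y \<partial>N)" by (rule transN) measurable
      also have "\<dots> = emeasure N A" by simp
      finally show "(\<integral>\<^sup>+y. ?f (- y + x) * ?g x \<partial>N) = emeasure N A * ?g x" .
    qed
    also have "\<dots> = emeasure N A * b" by (simp add: nn_integral_cmult b_def)
    finally have "emeasure lborel A * b = emeasure N A * b" using I1 by simp
    hence "b * emeasure lborel A = b * emeasure N A" by (simp only: mult.commute)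
    thus ?thesis using b0 ennreal_mult_cancel_left[of b "emeasure lborel A" "emeasure N A"]
      by (auto simp del: infinity_ennreal_def simp add: top_unique infinity_ennreal_def[symmetric])
  qed
  show ?thesis
    unfolding N_def[symmetric] by (rule measure_eqI) (auto simp: main)
qed

lemma lebesgue_orth_aux:
  fixes Q :: "'a::euclidean_space \<Rightarrow> 'a"
  assumes Q: "orthogonal_transformation Q"
  shows "Q \<in> lebesgue \<rightarrow>\<^sub>M lebesgue" "distr lebesgue lebesgue Q = lebesgue"
proof -
  have Qm[measurable]: "Q \<in> borel_measurable borel" using orth_borel[OF Q] .
  have Qm': "Q \<in> lborel \<rightarrow>\<^sub>M lborel" by simp
  have d1: "distr lebesgue lborel Q = lborel"
  proof -
    have "distr lebesgue lborel Q = distr lborel lborel Q"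
      by (rule distr_completion) simp
    also have "\<dots> = distr lborel borel Q" by (rule distr_cong) auto
    also have "\<dots> = lborel" by (rule lborel_orth[OF Q])
    finally show ?thesis .
  qed
  have eq: "null_sets lborel = null_sets (distr lebesgue lborel Q)" by (simp add: d1)
  show "Q \<in> lebesgue \<rightarrow>\<^sub>M lebesgue"
    by (simp add: completion.measurable_completion2 eq measurable_completion)
  have "lebesgue = completion (distr lebesgue lborel Q)" by (simp add: d1)
  also have "\<dots> = distr lebesgue lebesgue Q"
    by (subst completion.completion_distr_eq) (auto simp: eq measurable_completion)
  finally show "distr lebesgue lebesgue Q = lebesgue" ..
qed

lemma lebesgue_orth:
  fixes Q :: "'a::euclidean_space \<Rightarrow> 'a"
  assumes Q: "orthogonal_transformation Q"
  shows "emeasure lebesgue (Q -` S) = emeasure lebesgue S"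
proof (cases "S \<in> sets lebesgue")
  case True
  have "emeasure lebesgue S = emeasure (distr lebesgue lebesgue Q) S"
    using lebesgue_orth_aux(2)[OF Q] by simp
  also have "\<dots> = emeasure lebesgue (Q -` S)"
    using True lebesgue_orth_aux(1)[OF Q] by (simp add: emeasure_distr)
  finally show ?thesis ..
next
  case False
  have Qi: "orthogonal_transformation (inv Q)" using Q orthogonal_transformation_inv by blast
  have QQ: "Q (inv Q v) = v" for v
    using Q orthogonal_transformation_surj by (metis surj_f_inv_f)
  have "Q -` S \<notin> sets lebesgue"
  proof
    assume "Q -` S \<in> sets lebesgue"
    hence "inv Q -` (Q -` S) \<inter> space lebesgue \<in> sets lebesgue"
      using lebesgue_orth_aux(1)[OF Qi] by (rule measurable_sets[rotated])
    moreover have "inv Q -` (Q -` S) \<inter> space lebesgue = S" using QQ by auto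
    ultimately show False using False by simp
  qed
  thus ?thesis using False by (simp add: emeasure_notin_sets)
qed

lemma orth_inner: "orthogonal_transformation (Q::'a::euclidean_space\<Rightarrow>'a) \<Longrightarrow> inner (Q v) (Q w) = inner v w"
  by (simp add: orthogonal_transformation_def)

lemma orth_inv_left: "orthogonal_transformation (Q::'a::euclidean_space\<Rightarrow>'a) \<Longrightarrow> inv Q (Q v) = v"
  by (meson inv_f_f orthogonal_transformation_inj)

lemma orth_inv_right: "orthogonal_transformation (Q::'a::euclidean_space\<Rightarrow>'a) \<Longrightarrow> Q (inv Q v) = v"
  by (meson surj_f_inv_f orthogonal_transformation_surj)

lemma orth_vimage_subsph:
  fixes Q :: "'a::euclidean_space \<Rightarrow> 'a"
  assumes Q: "orthogonal_transformation Q" and xy: "Q x = y"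
  shows "Q -` subsph y = subsph x"
  using orth_inner[OF Q] orthogonal_transformation_norm[OF Q] xy
  by (auto simp: subsph_def)

lemma orth_vimage_cyl:
  fixes Q :: "'a::euclidean_space \<Rightarrow> 'a"
  assumes Q: "orthogonal_transformation Q" and xy: "Q x = y"
  shows "Q -` cyl y B = cyl x (Q -` B)"
proof -
  have lin: "linear Q" using Q orthogonal_transformation_linear by blast
  have "w \<in> Q -` cyl y B \<longleftrightarrow> w \<in> cyl x (Q -` B)" for w
  proof
    assume "w \<in> Q -` cyl y B"
    then obtain t s b where tsb: "Q w = t *\<^sub>R b + s *\<^sub>R y" "t \<in> {0..1}" "s \<in> {0..1}" "b \<in> B"
      by (auto simp: cyl_def)
    have "Q w = Q (t *\<^sub>R inv Q b + s *\<^sub>R x)"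
      using tsb(1) xy lin orth_inv_right[OF Q] by (simp add: linear_add linear_scale)
    hence "w = t *\<^sub>R inv Q b + s *\<^sub>R x"
      using orthogonal_transformation_inj[OF Q] by (meson injD)
    thus "w \<in> cyl x (Q -` B)" using tsb orth_inv_right[OF Q] unfolding cyl_def by force
  next
    assume "w \<in> cyl x (Q -` B)"
    then obtain t s z where tsz: "w = t *\<^sub>R z + s *\<^sub>R x" "t \<in> {0..1}" "s \<in> {0..1}" "Q z \<in> B"
      by (auto simp: cyl_def)
    have "Q w = t *\<^sub>R Q z + s *\<^sub>R y" using tsz(1) xy lin by (simp add: linear_add linear_scale)
    thus "w \<in> Q -` cyl y B" using tsz unfolding cyl_def by force
  qed
  thus ?thesis by blast
qed

definition "surfmu x A = ennreal (real DIM('a) - 1) * emeasure lebesgue (cyl x A)"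
  for x :: "'a::euclidean_space"

definition "surfsets x = sets (restrict_space borel (subsph x))"
  for x :: "'a::euclidean_space"

lemma surf_alt: "surf x = measure_of (subsph x) (surfsets x) (surfmu x)"
  by (simp add: surf_def surfsets_def surfmu_def[abs_def])

lemma sigma_surfsets: "sigma_sets (subsph x) (surfsets x) = surfsets x"
  using sets.sigma_sets_eq[of "restrict_space borel (subsph x)"]
  by (simp add: surfsets_def space_restrict_space)

lemma surfsets_Pow: "surfsets x \<subseteq> Pow (subsph x)"
  using sets.space_closed[of "restrict_space borel (subsph x)"]
  by (simp add: surfsets_def space_restrict_space)

lemma sets_surf: "sets (surf x) = surfsets x"
proof -
  have "sets (measure_of (subsph x) (surfsets x) (surfmu x)) = sigma_sets (subsph x) (surfsets x)"
    by (rule sets_measure_of[OF surfsets_Pow])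
  thus ?thesis unfolding surf_alt sigma_surfsets .
qed

lemma space_surf: "space (surf x) = subsph x"
  unfolding surf_alt by (rule space_measure_of[OF surfsets_Pow])

lemma emeasure_surf: "emeasure (surf x) B =
   (if B \<in> surfsets x \<and> measure_space (subsph x) (surfsets x) (surfmu x) then surfmu x B else 0)"
  unfolding surf_alt emeasure_measure_of_conv sigma_surfsets by simp

lemma surfmu_rot:
  fixes Q :: "'a::euclidean_space \<Rightarrow> 'a"
  assumes Q: "orthogonal_transformation Q" and xy: "Q x = y"
  shows "surfmu x (Q -` B) = surfmu y B"
proof -
  have "emeasure lebesgue (cyl x (Q -` B)) = emeasure lebesgue (Q -` cyl y B)"
    by (simp add: orth_vimage_cyl[OF Q xy])
  also have "\<dots> = emeasure lebesgue (cyl y B)" by (rule lebesgue_orth[OF Q])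
  finally show ?thesis by (simp add: surfmu_def)
qed

lemma meas_rot:
  fixes Q :: "'a::euclidean_space \<Rightarrow> 'a"
  assumes Q: "orthogonal_transformation Q" and xy: "Q x = y"
  shows "Q \<in> surf x \<rightarrow>\<^sub>M surf y"
proof -
  have "Q \<in> restrict_space borel (subsph x) \<rightarrow>\<^sub>M restrict_space borel (subsph y)"
    apply (rule measurable_restrict_space2)
    subgoal using orth_vimage_subsph[OF Q xy] by (auto simp: space_restrict_space)
    apply (rule measurable_restrict_space1)
    by (rule orth_borel[OF Q])
  thus ?thesis
    by (simp add: measurable_def sets_surf space_surf surfsets_def space_restrict_space)
qed

lemma ms_rot:
  fixes Q :: "'a::euclidean_space \<Rightarrow> 'a"
  assumes Q: "orthogonal_transformation Q" and xy: "Q x = y"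
    and ms: "measure_space (subsph x) (surfsets x) (surfmu x)"
  shows "measure_space (subsph y) (surfsets y) (surfmu y)"
proof -
  define D where "D = distr (surf x) (surf y) Q"
  have m: "measure_space (space D) (sets D) (emeasure D)" by (rule measure_space)
  have sD: "space D = subsph y" "sets D = surfsets y"
    by (simp_all add: D_def space_surf sets_surf)
  have eq: "emeasure D B = surfmu y B" if "B \<in> surfsets y" for B
  proof -
    have e1: "emeasure D B = emeasure (surf x) (Q -` B \<inter> space (surf x))"
      unfolding D_def using that meas_rot[OF Q xy] by (simp add: emeasure_distr sets_surf)
    have vB: "Q -` B \<inter> space (surf x) = Q -` B"
      using that surfsets_Pow[of y] orth_vimage_subsph[OF Q xy] by (auto simp: space_surf)
    have QB: "Q -` B \<in> surfsets x"
      using measurable_sets[OF meas_rot[OF Q xy], of B] that vB by (simp add: sets_surf)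
    have "emeasure (surf x) (Q -` B) = surfmu x (Q -` B)" using ms QB by (simp add: emeasure_surf)
    thus ?thesis using e1 vB surfmu_rot[OF Q xy] by simp
  qed
  have "measure_space (subsph y) (sigma_sets (subsph y) (surfsets y)) (emeasure D) =
        measure_space (subsph y) (sigma_sets (subsph y) (surfsets y)) (surfmu y)"
    by (rule measure_space_eq[OF surfsets_Pow]) (simp add: sigma_surfsets eq)
  thus ?thesis using m sD by (simp add: sigma_surfsets)
qed

lemma surf_rot:
  fixes Q :: "'a::euclidean_space \<Rightarrow> 'a"
  assumes Q: "orthogonal_transformation Q" and xy: "Q x = y"
  shows "surf y = distr (surf x) (surf y) Q"
proof -
  have Qi: "orthogonal_transformation (inv Q)" using Q orthogonal_transformation_inv by blast
  have yx: "inv Q y = x" using xy orth_inv_left[OF Q] by blast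
  have ms: "measure_space (subsph x) (surfsets x) (surfmu x) \<longleftrightarrow>
            measure_space (subsph y) (surfsets y) (surfmu y)"
    using ms_rot[OF Q xy] ms_rot[OF Qi yx] by blast
  show ?thesis
  proof (rule measure_eqI)
    show "sets (surf y) = sets (distr (surf x) (surf y) Q)" by simp
    fix B assume B: "B \<in> sets (surf y)"
    hence B': "B \<in> surfsets y" by (simp add: sets_surf)
    have "emeasure (distr (surf x) (surf y) Q) B = emeasure (surf x) (Q -` B \<inter> space (surf x))"
      using B meas_rot[OF Q xy] by (simp add: emeasure_distr)
    also have vB: "Q -` B \<inter> space (surf x) = Q -` B"
      using B' surfsets_Pow[of y] orth_vimage_subsph[OF Q xy] by (auto simp: space_surf)
    finally have e1: "emeasure (distr (surf x) (surf y) Q) B = emeasure (surf x) (Q -` B)" .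
    have QB: "Q -` B \<in> surfsets x"
      using measurable_sets[OF meas_rot[OF Q xy], of B] B vB by (simp add: sets_surf)
    hence "emeasure (surf x) (Q -` B) = emeasure (surf y) B"
      using B' ms surfmu_rot[OF Q xy] by (simp add: emeasure_surf)
    thus "emeasure (surf y) B = emeasure (distr (surf x) (surf y) Q) B" using e1 by simp
  qed
qed

definition hrefl :: "'a::real_inner \<Rightarrow> 'a \<Rightarrow> 'a" where
  "hrefl e w = w - (2 * (w \<bullet> e) / (e \<bullet> e)) *\<^sub>R e"

lemma hrefl_linear: "linear (hrefl e)"
  by (rule linearI) (simp_all add: hrefl_def inner_add_left algebra_simps add_divide_distrib)

lemma hrefl_inner: "hrefl e v \<bullet> hrefl e w = v \<bullet> w"
proof (cases "e = 0")
  case True thus ?thesis by (simp add: hrefl_def)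
next
  case False
  hence E: "e \<bullet> e \<noteq> 0" by simp
  show ?thesis using E
    by (simp add: hrefl_def inner_diff_left inner_diff_right inner_commute field_simps)
qed

lemma hrefl_orth: "orthogonal_transformation (hrefl e)"
  unfolding orthogonal_transformation_def using hrefl_linear hrefl_inner by blast

lemma hrefl_sym: "hrefl e v \<bullet> w = v \<bullet> hrefl e w"
  by (simp add: hrefl_def inner_diff_left inner_diff_right inner_commute algebra_simps)

lemma hrefl_fix: "x \<bullet> e = 0 \<Longrightarrow> hrefl e x = x"
  by (simp add: hrefl_def)

lemma hrefl_swap:
  assumes "norm u = 1" "norm v = 1"
  shows "hrefl (u - v) u = v"
proof (cases "u = v")
  case True thus ?thesis by (simp add: hrefl_def)
next
  case False
  hence E: "(u - v) \<bullet> (u - v) \<noteq> 0" by simp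
  have uu: "u \<bullet> u = 1" "v \<bullet> v = 1" using assms by (simp_all add: dot_square_norm)
  have eq: "(u - v) \<bullet> (u - v) = 2 * (u \<bullet> (u - v))"
    using uu by (simp add: inner_diff_left inner_diff_right inner_commute)
  have c: "2 * (u \<bullet> (u - v)) / ((u - v) \<bullet> (u - v)) = 1"
    unfolding eq[symmetric] using E by (rule divide_self)
  show ?thesis unfolding hrefl_def c by simp
qed

lemma borel_surf: "f \<in> borel_measurable borel \<Longrightarrow> f \<in> borel_measurable (surf x)"
proof -
  assume f: "f \<in> borel_measurable borel"
  have "f \<in> borel_measurable (restrict_space borel (subsph x))"
    by (rule measurable_restrict_space1[OF f])
  moreover have "sets (surf x) = sets (restrict_space borel (subsph x))"
    by (simp add: sets_surf surfsets_def)
  ultimately show ?thesis using measurable_cong_sets by blast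
qed

lemma int_inv:
  fixes H :: "'a::euclidean_space \<Rightarrow> 'a"
    and f :: "'a \<Rightarrow> real"
  assumes H: "orthogonal_transformation H" and Hx: "H x = x" and f: "f \<in> borel_measurable borel"
  shows "(\<integral>z. f z \<partial>surf x) = (\<integral>z. f (H z) \<partial>surf x)"
proof -
  have "(\<integral>z. f z \<partial>surf x) = (\<integral>z. f z \<partial>distr (surf x) (surf x) H)"
    using surf_rot[OF H Hx] by simp
  also have "\<dots> = (\<integral>z. f (H z) \<partial>surf x)"
    by (rule integral_distr) (rule meas_rot[OF H Hx], rule borel_surf[OF f])
  finally show ?thesis .
qed

lemma mom_eq:
  fixes x u v :: "'a::euclidean_space"
  assumes "norm u = 1" "norm v = 1" "u \<bullet> x = 0" "v \<bullet> x = 0"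
  shows "(\<integral>z. (z \<bullet> u)^2 \<partial>surf x) = (\<integral>z. (z \<bullet> v)^2 \<partial>surf x)"
proof -
  let ?H = "hrefl (u - v)"
  have Hx: "?H x = x" using assms by (intro hrefl_fix) (simp add: inner_diff_right inner_commute)
  have "(\<integral>z. (z \<bullet> u)^2 \<partial>surf x) = (\<integral>z. (?H z \<bullet> u)^2 \<partial>surf x)"
    by (rule int_inv[OF hrefl_orth Hx]) simp
  also have "\<dots> = (\<integral>z. (z \<bullet> v)^2 \<partial>surf x)"
    by (simp add: hrefl_sym hrefl_swap assms)
  finally show ?thesis .
qed

lemma mom_perp:
  fixes x w e :: "'a::euclidean_space"
  assumes "norm e = 1" "e \<bullet> x = 0" "w \<bullet> x = 0"
  shows "(\<integral>z. (z \<bullet> w)^2 \<partial>surf x) = (norm w)^2 * (\<integral>z. (z \<bullet> e)^2 \<partial>surf x)"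
proof (cases "w = 0")
  case True thus ?thesis by simp
next
  case False
  define u where "u = (1 / norm w) *\<^sub>R w"
  have u: "norm u = 1" "u \<bullet> x = 0" using False assms by (simp_all add: u_def)
  have wu: "w = norm w *\<^sub>R u" using False by (simp add: u_def)
  have "(\<integral>z. (z \<bullet> w)^2 \<partial>surf x) = (\<integral>z. (norm w)^2 * (z \<bullet> u)^2 \<partial>surf x)"
    by (subst wu) (simp add: power_mult_distrib)
  also have "\<dots> = (norm w)^2 * (\<integral>z. (z \<bullet> u)^2 \<partial>surf x)"
    by (rule integral_mult_right_zero)
  also have "(\<integral>z. (z \<bullet> u)^2 \<partial>surf x) = (\<integral>z. (z \<bullet> e)^2 \<partial>surf x)"
    by (rule mom_eq) (use u assms in auto)
  finally show ?thesis .
qed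

lemma mom_gen:
  fixes x v e :: "'a::euclidean_space"
  assumes x: "norm x = 1" and e: "norm e = 1" "e \<bullet> x = 0"
  shows "(\<integral>z. (z \<bullet> v)^2 \<partial>surf x) = ((norm v)^2 - (v \<bullet> x)^2) * (\<integral>z. (z \<bullet> e)^2 \<partial>surf x)"
proof -
  define w where "w = v - (v \<bullet> x) *\<^sub>R x"
  have xx: "x \<bullet> x = 1" using x by (simp add: dot_square_norm)
  have wx: "w \<bullet> x = 0" using xx by (simp add: w_def inner_diff_left)
  have nw: "(norm w)^2 = (norm v)^2 - (v \<bullet> x)^2"
    unfolding power2_norm_eq_inner
    using xx by (simp add: w_def inner_diff_left inner_diff_right inner_commute
        power2_eq_square algebra_simps)
  have "(\<integral>z. (z \<bullet> v)^2 \<partial>surf x) = (\<integral>z. (z \<bullet> w)^2 \<partial>surf x)"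
  proof (rule Bochner_Integration.integral_cong[OF refl])
    fix z assume "z \<in> space (surf x)"
    hence "z \<bullet> x = 0" by (simp add: space_surf subsph_def inner_commute)
    thus "(z \<bullet> v)^2 = (z \<bullet> w)^2" by (simp add: w_def inner_diff_right)
  qed
  also have "\<dots> = ((norm v)^2 - (v \<bullet> x)^2) * (\<integral>z. (z \<bullet> e)^2 \<partial>surf x)"
    using mom_perp[OF e wx] nw by simp
  finally show ?thesis .
qed

lemma integrable_sq:
  assumes fin: "finite_measure (surf x)"
  shows "integrable (surf x) (\<lambda>z. (z \<bullet> v)^2)"
proof (rule finite_measure.integrable_const_bound[OF fin])
  show "AE z in surf x. norm ((z \<bullet> v)^2) \<le> (norm v)^2"
  proof (rule AE_I2)
    fix z assume "z \<in> space (surf x)"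
    hence nz: "norm z = 1" by (simp add: space_surf subsph_def)
    have "\<bar>z \<bullet> v\<bar> \<le> norm v" using Cauchy_Schwarz_ineq2[of z v] nz by simp
    hence "\<bar>z \<bullet> v\<bar>^2 \<le> (norm v)^2" by (rule power_mono[OF _ abs_ge_zero])
    thus "norm ((z \<bullet> v)^2) \<le> (norm v)^2" by simp
  qed
  show "(\<lambda>z. (z \<bullet> v)^2) \<in> borel_measurable (surf x)" by (rule borel_surf) simp
qed

lemma sum_basis_sq: "(\<Sum>b\<in>Basis. (z \<bullet> b)^2) = (norm z)^2"
  unfolding power2_norm_eq_inner by (subst euclidean_inner) (simp add: power2_eq_square)

lemma exists_perp:
  fixes x :: "'a::euclidean_space"
  assumes x: "norm x = 1" and d: "DIM('a) \<ge> 2"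
  shows "\<exists>e. norm e = 1 \<and> e \<bullet> x = 0"
proof (rule ccontr)
  assume H: "\<not> ?thesis"
  have xx: "x \<bullet> x = 1" using x by (simp add: dot_square_norm)
  have "(norm (b - (b \<bullet> x) *\<^sub>R x))^2 = 0" if "b \<in> Basis" for b
  proof -
    have "b - (b \<bullet> x) *\<^sub>R x = 0"
    proof (rule ccontr)
      assume ne: "b - (b \<bullet> x) *\<^sub>R x \<noteq> 0"
      let ?e = "(1 / norm (b - (b \<bullet> x) *\<^sub>R x)) *\<^sub>R (b - (b \<bullet> x) *\<^sub>R x)"
      have "norm ?e = 1" using ne by simp
      moreover have "?e \<bullet> x = 0" using xx by (simp add: inner_diff_left)
      ultimately show False using H by blast
    qed
    thus ?thesis by simp
  qed
  hence "(\<Sum>b\<in>Basis. (norm (b - (b \<bullet> x) *\<^sub>R x))^2) = 0" by simp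
  moreover have "(norm (b - (b \<bullet> x) *\<^sub>R x))^2 = 1 - (x \<bullet> b)^2" if "b \<in> Basis" for b
    unfolding power2_norm_eq_inner
    using xx that by (simp add: inner_diff_left inner_diff_right inner_commute
        power2_eq_square algebra_simps)
  ultimately have "(\<Sum>b\<in>Basis. 1 - (x \<bullet> b)^2) = (0::real)" by simp
  hence "real DIM('a) - (\<Sum>b\<in>Basis. (x \<bullet> b)^2) = 0" by (simp add: sum_subtractf)
  thus False using sum_basis_sq[of x] x d by simp
qed

lemma moment:
  fixes x v :: "'a::euclidean_space"
  assumes x: "norm x = 1" and d: "DIM('a) \<ge> 2" and fin: "finite_measure (surf x)"
  shows "(\<integral>z. (z \<bullet> v)^2 \<partial>surf x) =
           ((norm v)^2 - (v \<bullet> x)^2) * measure (surf x) (subsph x) / (real DIM('a) - 1)"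
proof -
  obtain e where e: "norm e = 1" "e \<bullet> x = 0" using exists_perp[OF x d] by blast
  define K where "K = (\<integral>z. (z \<bullet> e)^2 \<partial>surf x)"
  have xx: "x \<bullet> x = 1" using x by (simp add: dot_square_norm)
  have "measure (surf x) (subsph x) = (\<integral>z. 1 \<partial>surf x)" by (simp add: space_surf)
  also have "\<dots> = (\<integral>z. (\<Sum>b\<in>Basis. (z \<bullet> b)^2) \<partial>surf x)"
    by (rule Bochner_Integration.integral_cong[OF refl])
       (simp add: sum_basis_sq space_surf subsph_def)
  also have "\<dots> = (\<Sum>b\<in>Basis. (\<integral>z. (z \<bullet> b)^2 \<partial>surf x))"
    by (rule Bochner_Integration.integral_sum) (rule integrable_sq[OF fin])
  also have "\<dots> = (\<Sum>b\<in>Basis. (1 - (x \<bullet> b)^2) * K)"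
  proof (rule sum.cong[OF refl])
    fix b :: 'a assume "b \<in> Basis"
    thus "(\<integral>z. (z \<bullet> b)^2 \<partial>surf x) = (1 - (x \<bullet> b)^2) * K"
      using mom_gen[OF x e, of b] by (simp add: K_def inner_commute)
  qed
  also have "\<dots> = (real DIM('a) - 1) * K"
    using sum_basis_sq[of x] x by (simp add: sum_distrib_right[symmetric] sum_subtractf)
  finally have MK: "measure (surf x) (subsph x) = (real DIM('a) - 1) * K" .
  have d1: "real DIM('a) - 1 \<noteq> 0" using d by simp
  have "(\<integral>z. (z \<bullet> v)^2 \<partial>surf x) = ((norm v)^2 - (v \<bullet> x)^2) * K"
    using mom_gen[OF x e, of v] by (simp only: K_def)
  also have "\<dots> = ((norm v)^2 - (v \<bullet> x)^2) * ((real DIM('a) - 1) * K) / (real DIM('a) - 1)"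
    using d1 by simp
  also have "\<dots> = ((norm v)^2 - (v \<bullet> x)^2) * measure (surf x) (subsph x) / (real DIM('a) - 1)"
    by (simp only: MK)
  finally show ?thesis .
qed

definition rotxy :: "'a::euclidean_space \<Rightarrow> 'a \<Rightarrow> 'a \<Rightarrow> 'a" where
  "rotxy x y = hrefl (x + y) \<circ> hrefl x"

lemma rotxy_orth: "orthogonal_transformation (rotxy x y)"
  unfolding rotxy_def by (rule orthogonal_transformation_compose) (rule hrefl_orth)+

lemma hrefl_self: "x \<noteq> 0 \<Longrightarrow> hrefl x x = - x"
  by (simp add: hrefl_def scaleR_2 algebra_simps)

lemma rotxy_xy:
  fixes x y :: "'a::euclidean_space"
  assumes x: "norm x = 1" and y: "norm y = 1"
  shows "rotxy x y x = y"
proof -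
  have xx: "x \<bullet> x = 1" "y \<bullet> y = 1" using x y by (simp_all add: dot_square_norm)
  have x0: "x \<noteq> 0" using x by auto
  show ?thesis
  proof (cases "x + y = 0")
    case True
    hence "y = - x" by (simp add: add_eq_0_iff)
    thus ?thesis using x0 by (simp add: rotxy_def hrefl_self hrefl_def scaleR_2)
  next
    case False
    hence E: "(x + y) \<bullet> (x + y) \<noteq> 0" by simp
    have eq: "(x + y) \<bullet> (x + y) = 2 * (x \<bullet> (x + y))"
      using xx by (simp add: inner_add_left inner_add_right inner_commute)
    have c: "2 * (x \<bullet> (x + y)) / ((x + y) \<bullet> (x + y)) = 1"
      unfolding eq[symmetric] using E by (rule divide_self)
    have "hrefl (x + y) (- x) = - x + (2 * (x \<bullet> (x + y)) / ((x + y) \<bullet> (x + y))) *\<^sub>R (x + y)"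
      by (simp add: hrefl_def inner_minus_left)
    also have "\<dots> = y" unfolding c by simp
    finally show ?thesis using x0 by (simp add: rotxy_def hrefl_self)
  qed
qed

lemma rot_diff_general:
  fixes x y z :: "'a::euclidean_space"
  assumes xx: "x \<bullet> x = 1" and zx: "z \<bullet> x = 0" and t: "x \<bullet> y \<noteq> -1" and yy: "y \<bullet> y = 1"
  shows "(c *\<^sub>R x + s *\<^sub>R z) - rotxy x y (c *\<^sub>R x + s *\<^sub>R z) =
          c *\<^sub>R (x - y) + (s * (z \<bullet> y) / (1 + x \<bullet> y)) *\<^sub>R (x + y)"
proof -
  have h1: "hrefl x (c *\<^sub>R x + s *\<^sub>R z) = - c *\<^sub>R x + s *\<^sub>R z"
  proof -
    have "(c *\<^sub>R x + s *\<^sub>R z) \<bullet> x = c" using xx zx by (simp add: inner_add_left)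
    hence "hrefl x (c *\<^sub>R x + s *\<^sub>R z) = c *\<^sub>R x + s *\<^sub>R z - (c + c) *\<^sub>R x"
      using xx by (simp add: hrefl_def)
    also have "\<dots> = - c *\<^sub>R x + s *\<^sub>R z" by (simp only: scaleR_left_distrib) (simp add: algebra_simps)
    finally show ?thesis .
  qed
  have E: "(x + y) \<bullet> (x + y) = 2 * (1 + x \<bullet> y)"
    using xx yy by (simp add: inner_add_left inner_add_right inner_commute)
  have t1: "1 + x \<bullet> y \<noteq> 0" using t by (metis add.commute add_eq_0_iff eq_neg_iff_add_eq_0)
  have w: "(- c *\<^sub>R x + s *\<^sub>R z) \<bullet> (x + y) = - c * (1 + x \<bullet> y) + s * (z \<bullet> y)"
    using xx zx by (simp add: inner_add_left inner_add_right inner_commute algebra_simps)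
  have k: "2 * ((- c *\<^sub>R x + s *\<^sub>R z) \<bullet> (x + y)) / ((x + y) \<bullet> (x + y))
           = - c + s * (z \<bullet> y) / (1 + x \<bullet> y)"
    unfolding w E using t1 by (simp add: field_simps)
  have "rotxy x y (c *\<^sub>R x + s *\<^sub>R z) = (- c *\<^sub>R x + s *\<^sub>R z) - (- c + s * (z \<bullet> y) / (1 + x \<bullet> y)) *\<^sub>R (x + y)"
    unfolding rotxy_def o_def h1 hrefl_def[of "x + y"] k ..
  thus ?thesis by (simp add: algebra_simps)
qed

lemma rot_norm:
  fixes x y z :: "'a::euclidean_space"
  assumes x: "norm x = 1" and y: "norm y = 1" and z: "norm z = 1" and zx: "z \<bullet> x = 0"
    and xy: "x \<noteq> y"
  shows "norm ((c *\<^sub>R x + s *\<^sub>R z) - rotxy x y (c *\<^sub>R x + s *\<^sub>R z)) =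
         norm (x - y) * sqrt (c^2 + s^2 * (if x \<bullet> y = -1 then 0 else (z \<bullet> y)^2 / (1 - (x \<bullet> y)^2)))"
proof -
  have xx: "x \<bullet> x = 1" "y \<bullet> y = 1" using x y by (simp_all add: dot_square_norm)
  define t where "t = x \<bullet> y"
  have nd: "(norm (x - y))^2 = 2 - 2 * t"
    unfolding power2_norm_eq_inner t_def using xx
    by (simp add: inner_diff_left inner_diff_right inner_commute)
  show ?thesis
  proof (cases "t = -1")
    case True
    have "norm (x + y) = 0"
    proof -
      have "(norm (x + y))^2 = 0" unfolding power2_norm_eq_inner using xx True
        by (simp add: inner_add_left inner_add_right inner_commute t_def)
      thus ?thesis by simp
    qed
    hence yx: "y = - x" by (simp add: add_eq_0_iff)
    have "(c *\<^sub>R x + s *\<^sub>R z) - rotxy x y (c *\<^sub>R x + s *\<^sub>R z) = (2 * c) *\<^sub>R x"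
      using xx zx yx by (simp add: rotxy_def hrefl_def inner_add_left inner_commute algebra_simps scaleR_2)
    hence "norm ((c *\<^sub>R x + s *\<^sub>R z) - rotxy x y (c *\<^sub>R x + s *\<^sub>R z)) = 2 * \<bar>c\<bar>"
      using x by simp
    moreover have "norm (x - y) = 2" using yx x by (simp add: scaleR_2[symmetric])
    ultimately show ?thesis using True by (simp add: t_def)
  next
    case False
    have t1: "t < 1"
    proof -
      have "t \<le> 1" using Cauchy_Schwarz_ineq2[of x y] x y by (simp add: t_def)
      moreover have "t \<noteq> 1"
      proof
        assume "t = 1"
        hence "(norm (x - y))^2 = 0" using nd by simp
        thus False using xy by simp
      qed
      ultimately show ?thesis by simp
    qed
    have tm: "t > -1"
    proof -
      have "- t \<le> 1" using Cauchy_Schwarz_ineq2[of x y] x y by (simp add: t_def)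
      thus ?thesis using False by simp
    qed
    have D: "(c *\<^sub>R x + s *\<^sub>R z) - rotxy x y (c *\<^sub>R x + s *\<^sub>R z) =
          c *\<^sub>R (x - y) + (s * (z \<bullet> y) / (1 + t)) *\<^sub>R (x + y)"
      using rot_diff_general[OF xx(1) zx _ xx(2)] False by (simp add: t_def)
    define k where "k = s * (z \<bullet> y) / (1 + t)"
    have "(norm (c *\<^sub>R (x - y) + k *\<^sub>R (x + y)))^2 = c^2 * (2 - 2 * t) + k^2 * (2 + 2 * t)"
      unfolding power2_norm_eq_inner using xx
      by (simp add: inner_add_left inner_add_right inner_diff_left inner_diff_right inner_commute
          t_def algebra_simps power2_eq_square)
    also have "\<dots> = (2 - 2 * t) * (c^2 + s^2 * ((z \<bullet> y)^2 / (1 - t^2)))"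
    proof -
      have n1: "1 + t \<noteq> 0" "1 - t \<noteq> 0" using t1 tm by auto
      have kA: "k * (1 + t) = s * (z \<bullet> y)" using n1 by (simp add: k_def)
      have "k^2 * (2 + 2*t) = 2 * k * (k * (1 + t))" by (simp add: power2_eq_square algebra_simps)
      also have "\<dots> = 2 * k * (s * (z \<bullet> y))" by (simp only: kA)
      also have "\<dots> = 2 * s^2 * (z \<bullet> y)^2 / (1+t)" by (simp add: k_def power2_eq_square)
      finally have a: "k^2 * (2 + 2*t) = 2 * s^2 * (z \<bullet> y)^2 / (1+t)" .
      have f: "1 - t^2 = (1 - t) * (1 + t)" by (simp add: algebra_simps power2_eq_square)
      have "(2 - 2*t) * (s^2 * ((z \<bullet> y)^2 / (1 - t^2))) =
           ((1 - t) * (2 * s^2 * (z \<bullet> y)^2)) / ((1 - t) * (1 + t))"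
        unfolding f by (simp add: times_divide_eq_right algebra_simps)
      also have "\<dots> = 2 * s^2 * (z \<bullet> y)^2 / (1+t)"
        by (rule mult_divide_mult_cancel_left[OF n1(2)])
      finally have b: "(2 - 2*t) * (s^2 * ((z \<bullet> y)^2 / (1 - t^2))) = 2 * s^2 * (z \<bullet> y)^2 / (1+t)" .
      show ?thesis using a b by (simp add: algebra_simps)
    qed
    moreover have nn: "0 \<le> c^2 + s^2 * ((z \<bullet> y)^2 / (1 - t^2))"
    proof -
      have "t^2 < 1" using t1 tm by (simp add: abs_square_less_1)
      thus ?thesis by (intro add_nonneg_nonneg mult_nonneg_nonneg divide_nonneg_pos) auto
    qed
    ultimately have "(norm (c *\<^sub>R (x - y) + k *\<^sub>R (x + y)))^2 =
        ((norm (x - y)) * sqrt (c^2 + s^2 * ((z \<bullet> y)^2 / (1 - t^2))))^2"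
      by (simp add: nd power_mult_distrib)
    hence "norm (c *\<^sub>R (x - y) + k *\<^sub>R (x + y)) =
        (norm (x - y)) * sqrt (c^2 + s^2 * ((z \<bullet> y)^2 / (1 - t^2)))"
      by (rule power2_eq_imp_eq) (use nn in auto)
    thus ?thesis using D False by (simp add: k_def t_def)
  qed
qed

definition cst :: "'a::euclidean_space \<Rightarrow> real" where
  "cst x = 1 / (2 * pi * measure (surf x) (subsph x))"

definition G0 :: "'a::euclidean_space \<Rightarrow> ('a \<times> real) measure" where
  "G0 x = density (surf x \<Otimes>\<^sub>M lborel) (\<lambda>p. ennreal (cst x) * indicator {0..<2*pi} (snd p))"

definition gfun :: "'a::euclidean_space \<Rightarrow> 'a set \<Rightarrow> ennreal" where
  "gfun x A = (\<integral>\<^sup>+ z. (\<integral>\<^sup>+ \<omega>. indicator {0..<2*pi} \<omega> *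
           indicator A (cos \<omega> *\<^sub>R x + sin \<omega> *\<^sub>R z) \<partial>lborel) \<partial>surf x)"

lemma space_sph: "space sph_space = Sph"
  by (simp add: sph_space_def space_restrict_space)

lemma sets_G0[measurable_cong]: "sets (G0 x) = sets (surf x \<Otimes>\<^sub>M lborel)"
  by (simp add: G0_def)

lemma space_G0: "space (G0 x) = space (surf x \<Otimes>\<^sub>M lborel)"
  by (simp add: G0_def)

lemma GSS_alt: "GSS x = measure_of Sph (sets sph_space) (\<lambda>A. ennreal (cst x) * gfun x A)"
  by (simp add: GSS_def cst_def gfun_def)

lemma fst_borel: "(\<lambda>p. L (fst p)) \<in> borel_measurable (surf x \<Otimes>\<^sub>M (lborel :: real measure))"
  if "L \<in> borel_measurable borel" for L :: "'a::euclidean_space \<Rightarrow> 'b::topological_space"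
  by (rule measurable_compose[OF measurable_fst borel_surf[OF that]])

lemma snd_borel: "(\<lambda>p. snd p) \<in> borel_measurable (surf x \<Otimes>\<^sub>M (lborel :: real measure))"
  using measurable_compose[OF measurable_snd, of "\<lambda>x. x" "surf x" lborel borel]
  by simp

lemma Psi_meas:
  fixes x w :: "'a::euclidean_space" and L :: "'a \<Rightarrow> 'a"
  assumes L: "orthogonal_transformation L" and w: "norm w = 1"
    and perp: "\<And>z. z \<in> subsph x \<Longrightarrow> L z \<bullet> w = 0"
  shows "(\<lambda>p. cos (snd p) *\<^sub>R w + sin (snd p) *\<^sub>R L (fst p)) \<in> (surf x \<Otimes>\<^sub>M (lborel :: real measure)) \<rightarrow>\<^sub>M sph_space"
  unfolding sph_space_def
proof (rule measurable_restrict_space2)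
  have [measurable]: "(\<lambda>p. L (fst p)) \<in> borel_measurable (surf x \<Otimes>\<^sub>M (lborel :: real measure))"
    by (rule fst_borel[OF orth_borel[OF L]])
  have [measurable]: "(\<lambda>p. snd p) \<in> borel_measurable (surf x \<Otimes>\<^sub>M (lborel :: real measure))"
    by (rule snd_borel)
  show "(\<lambda>p. cos (snd p) *\<^sub>R w + sin (snd p) *\<^sub>R L (fst p)) \<in> borel_measurable (surf x \<Otimes>\<^sub>M (lborel :: real measure))"
    by measurable
  show "(\<lambda>p. cos (snd p) *\<^sub>R w + sin (snd p) *\<^sub>R L (fst p)) \<in> space (surf x \<Otimes>\<^sub>M (lborel :: real measure)) \<rightarrow> Sph"
  proof
    fix p assume "p \<in> space (surf x \<Otimes>\<^sub>M (lborel :: real measure))"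
    hence z: "fst p \<in> subsph x" by (auto simp: space_pair_measure space_surf)
    hence nz: "norm (L (fst p)) = 1" using orthogonal_transformation_norm[OF L]
      by (simp add: subsph_def)
    have pz: "L (fst p) \<bullet> w = 0" using perp[OF z] .
    have ww: "w \<bullet> w = 1" "L (fst p) \<bullet> L (fst p) = 1" using w nz by (simp_all add: dot_square_norm)
    have "(norm (cos (snd p) *\<^sub>R w + sin (snd p) *\<^sub>R L (fst p)))^2 = (cos (snd p))^2 + (sin (snd p))^2"
      unfolding power2_norm_eq_inner using ww pz
      by (simp add: inner_add_left inner_add_right inner_commute power2_eq_square)
    also have "\<dots> = 1" by simp
    finally show "cos (snd p) *\<^sub>R w + sin (snd p) *\<^sub>R L (fst p) \<in> Sph"
      by (simp add: power2_eq_1_iff) (metis norm_ge_zero neg_0_le_iff_le zero_neq_one not_one_le_zero)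
  qed
qed

lemma emeasure_G0_distr:
  fixes x :: "'a::euclidean_space"
  assumes Psi: "Psi \<in> (surf x \<Otimes>\<^sub>M (lborel :: real measure)) \<rightarrow>\<^sub>M sph_space" and a: "a \<in> sets sph_space"
  shows "emeasure (distr (G0 x) sph_space Psi) a =
    ennreal (cst x) * (\<integral>\<^sup>+ z. (\<integral>\<^sup>+ \<omega>. indicator {0..<2*pi} \<omega> * indicator a (Psi (z, \<omega>)) \<partial>lborel) \<partial>surf x)"
proof -
  interpret lborel: sigma_finite_measure "lborel :: real measure" by (rule sigma_finite_lborel)
  let ?M = "surf x \<Otimes>\<^sub>M (lborel :: real measure)"
  have Psi': "Psi \<in> G0 x \<rightarrow>\<^sub>M sph_space"
    using Psi by (simp add: measurable_def sets_G0 space_G0)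
  have [measurable]: "(\<lambda>p. indicator a (Psi p) :: ennreal) \<in> borel_measurable ?M"
    using measurable_compose[OF Psi borel_measurable_indicator[OF a]] .
  have [measurable]: "(\<lambda>p. snd p) \<in> borel_measurable ?M" by (rule snd_borel)
  have set: "Psi -` a \<inter> space ?M \<in> sets ?M" using measurable_sets[OF Psi a] .
  have "emeasure (distr (G0 x) sph_space Psi) a = emeasure (G0 x) (Psi -` a \<inter> space ?M)"
    using a Psi' by (simp add: emeasure_distr space_G0)
  also have "\<dots> = (\<integral>\<^sup>+ p. ennreal (cst x) * indicator {0..<2*pi} (snd p) * indicator (Psi -` a \<inter> space ?M) p \<partial>?M)"
    unfolding G0_def by (subst emeasure_density) (use set in auto)
  also have "\<dots> = (\<integral>\<^sup>+ p. ennreal (cst x) * (indicator {0..<2*pi} (snd p) * indicator a (Psi p)) \<partial>?M)"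
    by (rule nn_integral_cong) (auto simp: indicator_def)
  also have "\<dots> = ennreal (cst x) * (\<integral>\<^sup>+ p. indicator {0..<2*pi} (snd p) * indicator a (Psi p) \<partial>?M)"
    by (rule nn_integral_cmult) measurable
  also have "(\<integral>\<^sup>+ p. indicator {0..<2*pi} (snd p) * indicator a (Psi p) \<partial>?M) =
      (\<integral>\<^sup>+ z. (\<integral>\<^sup>+ \<omega>. indicator {0..<2*pi} \<omega> * indicator a (Psi (z, \<omega>)) \<partial>lborel) \<partial>surf x)"
    by (rule lborel.nn_integral_fst[symmetric, where f="\<lambda>p. indicator {0..<2*pi} (snd p) * indicator a (Psi p)", simplified]) measurable
  finally show ?thesis .
qed

lemma GSS_eqI:
  fixes x :: "'a::euclidean_space"
  assumes "\<And>a. a \<in> sets sph_space \<Longrightarrow> emeasure (distr (G0 x) sph_space Psi) a = ennreal (cst x) * gfun x a"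
  shows "GSS x = distr (G0 x) sph_space Psi"
proof -
  let ?D = "distr (G0 x) sph_space Psi"
  have cl: "sets sph_space \<subseteq> Pow Sph" using sets.space_closed[of sph_space] by (simp add: space_sph)
  have sig: "sigma_sets Sph (sets sph_space) = sets sph_space"
    using sets.sigma_sets_eq[of sph_space] by (simp add: space_sph)
  have "GSS x = measure_of Sph (sets sph_space) (emeasure ?D)"
    unfolding GSS_alt by (rule measure_of_eq[OF cl]) (simp add: sig assms)
  also have "\<dots> = measure_of (space ?D) (sets ?D) (emeasure ?D)" by (simp add: space_sph)
  also have "\<dots> = ?D" by (rule measure_of_of_measure)
  finally show ?thesis .
qed

lemma GSS_distr1:
  fixes x :: "'a::euclidean_space"
  assumes x: "norm x = 1"
  shows "GSS x = distr (G0 x) sph_space (\<lambda>p. cos (snd p) *\<^sub>R x + sin (snd p) *\<^sub>R fst p)"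
proof (rule GSS_eqI)
  have m: "(\<lambda>p. cos (snd p) *\<^sub>R x + sin (snd p) *\<^sub>R id (fst p)) \<in> (surf x \<Otimes>\<^sub>M (lborel :: real measure)) \<rightarrow>\<^sub>M sph_space"
    by (rule Psi_meas) (use x in \<open>auto simp: subsph_def inner_commute\<close>)
  fix a :: "'a set" assume a: "a \<in> sets sph_space"
  show "emeasure (distr (G0 x) sph_space (\<lambda>p. cos (snd p) *\<^sub>R x + sin (snd p) *\<^sub>R fst p)) a = ennreal (cst x) * gfun x a"
    using emeasure_G0_distr[OF m[simplified] a] by (simp add: gfun_def)
qed

lemma GSS_eqI':
  fixes x :: "'a::euclidean_space" and D :: "'a measure"
  assumes sD: "sets D = sets sph_space" and spD: "space D = Sph"
    and eq: "\<And>a. a \<in> sets sph_space \<Longrightarrow> emeasure D a = ennreal (cst x) * gfun x a"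
  shows "GSS x = D"
proof -
  have cl: "sets sph_space \<subseteq> Pow Sph" using sets.space_closed[of sph_space] by (simp add: space_sph)
  have sig: "sigma_sets Sph (sets sph_space) = sets sph_space"
    using sets.sigma_sets_eq[of sph_space] by (simp add: space_sph)
  have "GSS x = measure_of Sph (sets sph_space) (emeasure D)"
    unfolding GSS_alt by (rule measure_of_eq[OF cl]) (simp add: sig eq)
  also have "\<dots> = measure_of (space D) (sets D) (emeasure D)" by (simp add: spD sD)
  also have "\<dots> = D" by (rule measure_of_of_measure)
  finally show ?thesis .
qed

lemma cst_rot:
  fixes Q :: "'a::euclidean_space \<Rightarrow> 'a"
  assumes Q: "orthogonal_transformation Q" and xy: "Q x = y"
  shows "cst y = cst x"
proof -
  have "subsph y \<in> sets (surf y)" using sets.top[of "surf y"] by (simp add: space_surf)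
  hence "measure (surf y) (subsph y) = measure (distr (surf x) (surf y) Q) (subsph y)"
    using surf_rot[OF Q xy] by simp
  also have "\<dots> = measure (surf x) (Q -` subsph y \<inter> space (surf x))"
    using \<open>subsph y \<in> sets (surf y)\<close> meas_rot[OF Q xy] by (simp add: measure_distr)
  also have "Q -` subsph y \<inter> space (surf x) = subsph x"
    using orth_vimage_subsph[OF Q xy] by (simp add: space_surf)
  finally show ?thesis by (simp add: cst_def)
qed

lemma GSS_distr2:
  fixes x y :: "'a::euclidean_space" and Q :: "'a \<Rightarrow> 'a"
  assumes x: "norm x = 1" and y: "norm y = 1" and Q: "orthogonal_transformation Q" and xy: "Q x = y"
  shows "GSS y = distr (G0 x) sph_space (\<lambda>p. cos (snd p) *\<^sub>R y + sin (snd p) *\<^sub>R Q (fst p))"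
proof (rule GSS_eqI')
  interpret lborel: sigma_finite_measure "lborel :: real measure" by (rule sigma_finite_lborel)
  have perp: "Q z \<bullet> y = 0" if "z \<in> subsph x" for z
    using that orth_inner[OF Q, of z x] xy by (simp add: subsph_def inner_commute)
  have m: "(\<lambda>p. cos (snd p) *\<^sub>R y + sin (snd p) *\<^sub>R Q (fst p)) \<in> (surf x \<Otimes>\<^sub>M (lborel :: real measure)) \<rightarrow>\<^sub>M sph_space"
    by (rule Psi_meas[OF Q y perp])
  have my: "(\<lambda>p. cos (snd p) *\<^sub>R y + sin (snd p) *\<^sub>R id (fst p)) \<in> (surf y \<Otimes>\<^sub>M (lborel :: real measure)) \<rightarrow>\<^sub>M sph_space"
    by (rule Psi_meas) (use y in \<open>auto simp: subsph_def inner_commute\<close>)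
  fix a :: "'a set" assume a: "a \<in> sets sph_space"
  define F where "F z' = (\<integral>\<^sup>+ \<omega>. indicator {0..<2*pi} \<omega> * indicator a (cos \<omega> *\<^sub>R y + sin \<omega> *\<^sub>R z') \<partial>lborel)" for z'
  have [measurable]: "(\<lambda>p. indicator a (cos (snd p) *\<^sub>R y + sin (snd p) *\<^sub>R fst p) :: ennreal) \<in> borel_measurable (surf y \<Otimes>\<^sub>M (lborel :: real measure))"
    using measurable_compose[OF my borel_measurable_indicator[OF a]] by simp
  have [measurable]: "(\<lambda>p. snd p) \<in> borel_measurable (surf y \<Otimes>\<^sub>M (lborel :: real measure))" by (rule snd_borel)
  have Fm: "F \<in> borel_measurable (surf y)"
    unfolding F_def
    by (rule lborel.borel_measurable_nn_integral[where f="\<lambda>z' \<omega>. indicator {0..<2*pi} \<omega> * indicator a (cos \<omega> *\<^sub>R y + sin \<omega> *\<^sub>R z')", simplified]) measurable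
  have "emeasure (distr (G0 x) sph_space (\<lambda>p. cos (snd p) *\<^sub>R y + sin (snd p) *\<^sub>R Q (fst p))) a
      = ennreal (cst x) * (\<integral>\<^sup>+ z. F (Q z) \<partial>surf x)"
    using emeasure_G0_distr[OF m a] by (simp add: F_def)
  also have "(\<integral>\<^sup>+ z. F (Q z) \<partial>surf x) = (\<integral>\<^sup>+ z. F z \<partial>distr (surf x) (surf y) Q)"
    by (rule nn_integral_distr[symmetric]) (use meas_rot[OF Q xy] Fm in auto)
  also have "\<dots> = (\<integral>\<^sup>+ z. F z \<partial>surf y)" using surf_rot[OF Q xy] by simp
  also have "cst x = cst y" using cst_rot[OF Q xy] by simp
  finally show "emeasure (distr (G0 x) sph_space (\<lambda>p. cos (snd p) *\<^sub>R y + sin (snd p) *\<^sub>R Q (fst p))) a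
      = ennreal (cst y) * gfun y a" by (simp add: gfun_def F_def)
qed (simp_all add: space_sph)

lemma sqrt_tangent:
  fixes q m :: real
  assumes q: "0 \<le> q" and m: "0 < m"
  shows "sqrt q \<le> sqrt m + (q - m) / (2 * sqrt m)"
proof -
  have sm: "sqrt m > 0" using m by simp
  have "0 \<le> (sqrt q - sqrt m)^2" by simp
  hence "2 * sqrt q * sqrt m \<le> q + m" using q m by (simp add: power2_eq_square algebra_simps)
  hence "sqrt q \<le> (q + m) / (2 * sqrt m)" using sm by (simp add: field_simps)
  also have "(q + m) / (2 * sqrt m) = sqrt m + (q - m) / (2 * sqrt m)"
    using sm m by (simp add: field_simps)
  finally show ?thesis .
qed

lemma jensen_sqrt:
  fixes N :: "'a measure" and q :: "'a \<Rightarrow> real"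
  assumes fin: "finite_measure N" and int: "integrable N q"
    and nn: "\<And>z. z \<in> space N \<Longrightarrow> 0 \<le> q z"
    and le: "(\<integral>z. q z \<partial>N) \<le> measure N (space N) * m" and m: "0 < m"
  shows "(\<integral>\<^sup>+ z. ennreal (sqrt (q z)) \<partial>N) \<le> ennreal (measure N (space N) * sqrt m)"
proof -
  interpret finite_measure N by fact
  define g where "g z = sqrt m + (q z - m) / (2 * sqrt m)" for z
  have sm: "sqrt m > 0" using m by simp
  have gi: "integrable N g" unfolding g_def using int by (intro Bochner_Integration.integrable_add integrable_divide integrable_diff) auto
  have gq: "sqrt (q z) \<le> g z" if "z \<in> space N" for z
    unfolding g_def by (rule sqrt_tangent[OF nn[OF that] m])
  have "(\<integral>\<^sup>+ z. ennreal (sqrt (q z)) \<partial>N) \<le> (\<integral>\<^sup>+ z. ennreal (g z) \<partial>N)"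
    by (rule nn_integral_mono) (simp add: gq ennreal_leI)
  also have "\<dots> = ennreal (\<integral>z. g z \<partial>N)"
    by (rule nn_integral_eq_integral[OF gi]) (auto intro!: AE_I2 order_trans[OF _ gq] nn)
  also have "(\<integral>z. g z \<partial>N) = measure N (space N) * sqrt m + ((\<integral>z. q z \<partial>N) - measure N (space N) * m) / (2 * sqrt m)"
    unfolding g_def using int by (simp add: Bochner_Integration.integral_add integral_divide integral_diff)
  also have "\<dots> \<le> measure N (space N) * sqrt m"
    using le sm by (simp add: divide_nonpos_pos)
  finally show ?thesis by (simp add: ennreal_leI)
qed

lemma sin_sq_integral: "((\<lambda>w. (sin w)^2) has_integral pi) {0..2*pi}"
proof -
  have "((\<lambda>w. (sin w)^2) has_integral ((2*pi/2 - sin (2*(2*pi))/4) - (0/2 - sin (2*0)/4))) {0..2*pi}"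
  proof (rule fundamental_theorem_of_calculus)
    show "0 \<le> 2 * pi" by simp
    fix w :: real assume "w \<in> {0..2*pi}"
    have "((\<lambda>w. w/2 - sin (2*w)/4) has_real_derivative (1/2 - cos (2*w) * 2 / 4)) (at w)"
      by (auto intro!: derivative_eq_intros)
    moreover have "1/2 - cos (2*w) * 2 / 4 = (sin w)^2"
      using cos_double_sin[of w] by (simp add: field_simps)
    ultimately show "((\<lambda>w. w/2 - sin (2*w)/4) has_vector_derivative (sin w)^2) (at w within {0..2*pi})"
      by (simp add: has_real_derivative_iff_has_vector_derivative[symmetric] has_field_derivative_at_within)
  qed
  thus ?thesis by simp
qed

lemma rho_lt1:
  fixes d :: real
  assumes d: "d \<ge> 3"
  shows "(1 / (2 * pi)) * integral {0..2*pi} (\<lambda>w. sqrt ((cos w)^2 + (sin w)^2 / (d - 1))) < 1"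
proof -
  define k where "k = 1 - 1 / (d - 1)"
  have k: "0 < k" "k \<le> 1" using d by (auto simp: k_def field_simps)
  have pt: "sqrt ((cos w)^2 + (sin w)^2 / (d - 1)) \<le> 1 - k * (sin w)^2 / 2" for w
  proof -
    have e: "(cos w)^2 + (sin w)^2 / (d - 1) = 1 - k * (sin w)^2"
      using d by (simp add: k_def field_simps cos_squared_eq)
    define u where "u = k * (sin w)^2"
    have s1: "(sin w)^2 \<le> 1" by (simp add: sin_squared_eq)
    have u: "0 \<le> u" "u \<le> 1" using k mult_le_one[OF k(2) _ s1] by (auto simp: u_def)
    have "1 - u \<le> (1 - u/2)^2" by (simp add: power2_eq_square algebra_simps)
    hence "sqrt (1 - u) \<le> 1 - u/2" using u by (simp add: real_sqrt_le_iff')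
    thus ?thesis using e by (simp add: u_def)
  qed
  have c1: "continuous_on {0..2*pi} (\<lambda>w. sqrt ((cos w)^2 + (sin w)^2 / (d - 1)))"
    using d by (intro continuous_intros) auto
  have i2: "((\<lambda>w. 1 - k * (sin w)^2 / 2) has_integral (2*pi - k * pi / 2)) {0..2*pi}"
  proof -
    have "((\<lambda>w. 1::real) has_integral (2*pi)) {0..2*pi}"
      using has_integral_const_real[of "1::real" 0 "2*pi"] by simp
    moreover have "((\<lambda>w. k / 2 * (sin w)^2) has_integral (k/2 * pi)) {0..2*pi}"
      by (rule has_integral_mult_right[OF sin_sq_integral])
    ultimately have "((\<lambda>w. 1 - k / 2 * (sin w)^2) has_integral (2*pi - k/2 * pi)) {0..2*pi}"
      by (rule has_integral_diff)
    thus ?thesis by (simp add: algebra_simps)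
  qed
  have "integral {0..2*pi} (\<lambda>w. sqrt ((cos w)^2 + (sin w)^2 / (d - 1))) \<le> 2*pi - k * pi / 2"
    by (rule has_integral_le[OF integrable_integral[OF integrable_continuous_interval[OF c1]] i2]) (use pt in auto)
  also have "\<dots> < 2 * pi" using k by simp
  finally show ?thesis by (simp add: field_simps)
qed

lemma finite_surf:
  assumes "0 < measure (surf x) (subsph x)"
  shows "finite_measure (surf x)"
proof (rule finite_measureI)
  show "emeasure (surf x) (space (surf x)) \<noteq> \<infinity>"
  proof
    assume "emeasure (surf x) (space (surf x)) = \<infinity>"
    hence "measure (surf x) (subsph x) = 0" by (simp add: measure_def space_surf)
    thus False using assms by simp
  qed
qed

lemma main_bound:
  fixes x y :: "'a::euclidean_space"
  assumes x: "norm x = 1" and y: "norm y = 1" and xy: "x \<noteq> y" and d: "DIM('a) \<ge> 2"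
  shows "wass (GSS x) (GSS y) \<le> ennreal (norm (x - y) * ((1 / (2 * pi)) * integral {0..2*pi}
       (\<lambda>\<omega>. sqrt ((cos \<omega>)\<^sup>2 + (sin \<omega>)\<^sup>2 / (real DIM('a) - 1)))))"
proof -
  interpret lborel: sigma_finite_measure "lborel :: real measure" by (rule sigma_finite_lborel)
  define Q where "Q = rotxy x y"
  have Q: "orthogonal_transformation Q" by (simp add: Q_def rotxy_orth)
  have Qx: "Q x = y" using rotxy_xy[OF x y] by (simp add: Q_def)
  have Qlin: "linear Q" using Q orthogonal_transformation_linear by blast
  let ?M = "surf x \<Otimes>\<^sub>M (lborel :: real measure)"
  define P1 where "P1 p = cos (snd p) *\<^sub>R x + sin (snd p) *\<^sub>R fst p" for p :: "'a \<times> real"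
  define P2 where "P2 p = cos (snd p) *\<^sub>R y + sin (snd p) *\<^sub>R Q (fst p)" for p :: "'a \<times> real"
  have perp2: "Q z \<bullet> y = 0" if "z \<in> subsph x" for z
    using that orth_inner[OF Q, of z x] Qx by (simp add: subsph_def inner_commute)
  have m1: "P1 \<in> ?M \<rightarrow>\<^sub>M sph_space"
    using Psi_meas[of "\<lambda>z. z" x x] x unfolding P1_def[abs_def]
    by (simp add: subsph_def inner_commute)
  have m2: "P2 \<in> ?M \<rightarrow>\<^sub>M sph_space"
    using Psi_meas[OF Q y perp2] unfolding P2_def[abs_def] by simp
  have m1': "P1 \<in> G0 x \<rightarrow>\<^sub>M sph_space" using m1 by (simp add: measurable_def sets_G0 space_G0)
  have m2': "P2 \<in> G0 x \<rightarrow>\<^sub>M sph_space" using m2 by (simp add: measurable_def sets_G0 space_G0)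
  have mp: "(\<lambda>p. (P1 p, P2 p)) \<in> G0 x \<rightarrow>\<^sub>M sph_space \<Otimes>\<^sub>M sph_space"
    by (rule measurable_Pair[OF m1' m2'])
  define \<gamma> where "\<gamma> = distr (G0 x) (sph_space \<Otimes>\<^sub>M sph_space) (\<lambda>p. (P1 p, P2 p))"
  have g1: "distr \<gamma> sph_space fst = GSS x"
  proof -
    have "distr \<gamma> sph_space fst = distr (G0 x) sph_space (fst \<circ> (\<lambda>p. (P1 p, P2 p)))"
      unfolding \<gamma>_def by (rule distr_distr[OF measurable_fst mp])
    also have "fst \<circ> (\<lambda>p. (P1 p, P2 p)) = P1" by (simp add: o_def)
    finally show ?thesis using GSS_distr1[OF x] by (simp add: P1_def[abs_def])
  qed
  have g2: "distr \<gamma> sph_space snd = GSS y"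
  proof -
    have "distr \<gamma> sph_space snd = distr (G0 x) sph_space (snd \<circ> (\<lambda>p. (P1 p, P2 p)))"
      unfolding \<gamma>_def by (rule distr_distr[OF measurable_snd mp])
    also have "snd \<circ> (\<lambda>p. (P1 p, P2 p)) = P2" by (simp add: o_def)
    finally show ?thesis using GSS_distr2[OF x y Q Qx] by (simp add: P2_def[abs_def])
  qed
  have coup: "\<gamma> \<in> couplings (GSS x) (GSS y)" unfolding couplings_def using g1 g2 by (simp add: \<gamma>_def)
  have idb: "(\<lambda>v. v) \<in> sph_space \<rightarrow>\<^sub>M (borel :: 'a measure)"
    unfolding sph_space_def by (rule measurable_restrict_space1) simp
  have [measurable]: "(\<lambda>p. fst p) \<in> borel_measurable ((sph_space :: 'a measure) \<Otimes>\<^sub>M (sph_space :: 'a measure))"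
    using measurable_compose[OF measurable_fst idb, of "sph_space :: 'a measure"] by simp
  have [measurable]: "(\<lambda>p. snd p) \<in> borel_measurable ((sph_space :: 'a measure) \<Otimes>\<^sub>M (sph_space :: 'a measure))"
    using measurable_compose[OF measurable_snd idb, of "sph_space :: 'a measure"] by simp
  have m1b[measurable]: "P1 \<in> borel_measurable ?M" using measurable_compose[OF m1 idb] by simp
  have m2b[measurable]: "P2 \<in> borel_measurable ?M" using measurable_compose[OF m2 idb] by simp
  have [measurable]: "(\<lambda>p. snd p) \<in> borel_measurable ?M" by (rule snd_borel)
  define t where "t = x \<bullet> y"
  define A where "A = (if t = -1 then 0 else 1 / (1 - t^2))"
  define S where "S = measure (surf x) (subsph x)"
  define m where "m \<omega> = (cos \<omega>)\<^sup>2 + (sin \<omega>)\<^sup>2 / (real DIM('a) - 1)" for \<omega>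
  define I where "I = integral {0..2*pi} (\<lambda>\<omega>. sqrt (m \<omega>))"
  define qf where "qf \<omega> z = (cos \<omega>)^2 + (sin \<omega>)^2 * (A * (z \<bullet> y)^2)" for \<omega> z
  have pw: "norm (P1 p - P2 p) = norm (x - y) * sqrt (qf (snd p) (fst p))" if "p \<in> space ?M" for p
  proof -
    have z: "fst p \<in> subsph x" using that by (auto simp: space_pair_measure space_surf)
    hence nz: "norm (fst p) = 1" and zx: "fst p \<bullet> x = 0" by (auto simp: subsph_def inner_commute)
    have "P2 p = Q (P1 p)" using Qlin Qx by (simp add: P1_def P2_def linear_add linear_scale)
    hence "norm (P1 p - P2 p) = norm (x - y) * sqrt ((cos (snd p))^2 + (sin (snd p))^2 *
        (if x \<bullet> y = -1 then 0 else (fst p \<bullet> y)^2 / (1 - (x \<bullet> y)^2)))"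
      using rot_norm[OF x y nz zx xy, of "cos (snd p)" "sin (snd p)"] by (simp add: P1_def Q_def)
    thus ?thesis by (simp add: qf_def A_def t_def)
  qed
  have "wass (GSS x) (GSS y) \<le> (\<integral>\<^sup>+ p. ennreal (norm (fst p - snd p)) \<partial>\<gamma>)"
    unfolding wass_def by (rule INF_lower[OF coup])
  also have "\<dots> = (\<integral>\<^sup>+ p. ennreal (norm (P1 p - P2 p)) \<partial>G0 x)"
    unfolding \<gamma>_def by (subst nn_integral_distr[OF mp]) (simp_all)
  also have "\<dots> = (\<integral>\<^sup>+ p. ennreal (cst x) * indicator {0..<2*pi} (snd p) * ennreal (norm (P1 p - P2 p)) \<partial>?M)"
    unfolding G0_def by (subst nn_integral_density) (simp_all add: mult.assoc)
  also have "\<dots> \<le> ennreal (norm (x - y) * ((1 / (2 * pi)) * I))"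
  proof (cases "S > 0")
    case False
    hence "cst x = 0" using measure_nonneg[of "surf x" "subsph x"] by (simp add: cst_def S_def)
    thus ?thesis by simp
  next
    case True
    interpret fin: finite_measure "surf x" using finite_surf True by (simp add: S_def)
    interpret pair_sigma_finite "surf x" "lborel :: real measure" ..
    have t1: "t \<le> 1" using Cauchy_Schwarz_ineq2[of x y] x y by (simp add: t_def)
    have tm: "-1 \<le> t" using Cauchy_Schwarz_ineq2[of x y] x y by (simp add: t_def)
    have tn1: "t \<noteq> 1"
    proof
      assume "t = 1"
      have xx: "x \<bullet> x = 1" "y \<bullet> y = 1" using x y by (simp_all add: dot_square_norm)
      have "(x - y) \<bullet> (x - y) = 0" using xx \<open>t = 1\<close>
        by (simp add: inner_diff_left inner_diff_right inner_commute t_def)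
      thus False using xy by simp
    qed
    have S0: "0 \<le> S" using True by simp
    have c0: "0 \<le> cst x" using S0 by (simp add: cst_def S_def)
    have A0: "0 \<le> A" using t1 tm tn1 by (auto simp: A_def abs_square_le_1 intro!: divide_nonneg_pos)
    have dd: "real DIM('a) - 1 > 0" using d by simp
    have mpos: "0 < m \<omega>" for \<omega>
    proof (cases "cos \<omega> = 0")
      case True
      hence "(sin \<omega>)^2 = 1" using sin_squared_eq[of \<omega>] by simp
      thus ?thesis using True dd by (simp add: m_def)
    next
      case False thus ?thesis using dd by (simp add: m_def add_pos_nonneg)
    qed
    have inner: "(\<integral>\<^sup>+ z. ennreal (sqrt (qf \<omega> z)) \<partial>surf x) \<le> ennreal (S * sqrt (m \<omega>))" for \<omega>
    proof -
      have sp: "measure (surf x) (space (surf x)) = S" by (simp add: S_def space_surf)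
      have int: "integrable (surf x) (qf \<omega>)"
        unfolding qf_def[abs_def] using fin.finite_measure_axioms
        by (intro Bochner_Integration.integrable_add integrable_mult_right integrable_sq) auto
      have nn: "0 \<le> qf \<omega> z" for z using A0 by (simp add: qf_def)
      have mom: "(\<integral>z. (z \<bullet> y)^2 \<partial>surf x) = (1 - t^2) * S / (real DIM('a) - 1)"
        using moment[OF x d fin.finite_measure_axioms, of y] y by (simp add: S_def t_def inner_commute)
      have iq: "(\<integral>z. qf \<omega> z \<partial>surf x) = (cos \<omega>)^2 * S + (sin \<omega>)^2 * (A * ((1 - t^2) * S / (real DIM('a) - 1)))"
        unfolding qf_def using fin.finite_measure_axioms
        by (simp add: Bochner_Integration.integral_add integrable_sq sp mom)
      have "(\<integral>z. qf \<omega> z \<partial>surf x) \<le> S * m \<omega>"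
      proof (cases "t = -1")
        case True
        thus ?thesis using iq True dd \<open>S > 0\<close> by (simp add: A_def m_def algebra_simps)
      next
        case False
        have "1 - t^2 \<noteq> 0" using False tn1 by (auto simp: power2_eq_1_iff)
        hence "A * (1 - t^2) = 1" using False by (simp add: A_def)
        hence h: "A * ((1 - t^2) * S / (real DIM('a) - 1)) = S / (real DIM('a) - 1)"
          by (metis (no_types, lifting) mult.assoc mult_1 times_divide_eq_right)
        have e1: "(\<integral>z. qf \<omega> z \<partial>surf x) = (cos \<omega>)^2 * S + (sin \<omega>)^2 * (S / (real DIM('a) - 1))"
          by (rule iq[unfolded h])
        have e2: "S * m \<omega> = (cos \<omega>)^2 * S + (sin \<omega>)^2 * (S / (real DIM('a) - 1))"
          using dd by (simp add: m_def field_simps)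
        show ?thesis using e1 e2 by simp
      qed
      thus ?thesis using jensen_sqrt[OF fin.finite_measure_axioms int _ _ mpos] nn sp by simp
    qed
    have [measurable]: "(\<lambda>z. ennreal (sqrt (qf \<omega> z))) \<in> borel_measurable (surf x)" for \<omega>
      by (rule borel_surf) (simp add: qf_def)
    have "(\<integral>\<^sup>+ p. ennreal (cst x) * indicator {0..<2*pi} (snd p) * ennreal (norm (P1 p - P2 p)) \<partial>?M)
        = (\<integral>\<^sup>+ \<omega>. (\<integral>\<^sup>+ z. ennreal (cst x) * indicator {0..<2*pi} \<omega> * ennreal (norm (P1 (z, \<omega>) - P2 (z, \<omega>))) \<partial>surf x) \<partial>lborel)"
      by (rule nn_integral_snd[symmetric, where f="\<lambda>p. ennreal (cst x) * indicator {0..<2*pi} (snd p) * ennreal (norm (P1 p - P2 p))", simplified]) measurable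
    also have "\<dots> \<le> (\<integral>\<^sup>+ \<omega>. ennreal (cst x * norm (x - y) * S) * (ennreal (sqrt (m \<omega>)) * indicator {0..2*pi} \<omega>) \<partial>lborel)"
    proof (rule nn_integral_mono)
      fix \<omega> :: real
      have "(\<integral>\<^sup>+ z. ennreal (cst x) * indicator {0..<2*pi} \<omega> * ennreal (norm (P1 (z, \<omega>) - P2 (z, \<omega>))) \<partial>surf x)
          = (\<integral>\<^sup>+ z. (ennreal (cst x) * indicator {0..<2*pi} \<omega> * ennreal (norm (x - y))) * ennreal (sqrt (qf \<omega> z)) \<partial>surf x)"
      proof (rule nn_integral_cong)
        fix z assume "z \<in> space (surf x)"
        hence "(z, \<omega>) \<in> space ?M" by (simp add: space_pair_measure)
        thus "ennreal (cst x) * indicator {0..<2*pi} \<omega> * ennreal (norm (P1 (z, \<omega>) - P2 (z, \<omega>))) =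
            (ennreal (cst x) * indicator {0..<2*pi} \<omega> * ennreal (norm (x - y))) * ennreal (sqrt (qf \<omega> z))"
          using pw[of "(z, \<omega>)"] by (simp add: ennreal_mult' mult.assoc)
      qed
      also have "\<dots> = (ennreal (cst x) * indicator {0..<2*pi} \<omega> * ennreal (norm (x - y))) * (\<integral>\<^sup>+ z. ennreal (sqrt (qf \<omega> z)) \<partial>surf x)"
        by (rule nn_integral_cmult) measurable
      also have "\<dots> \<le> (ennreal (cst x) * indicator {0..<2*pi} \<omega> * ennreal (norm (x - y))) * ennreal (S * sqrt (m \<omega>))"
        by (rule mult_left_mono[OF inner]) simp
      also have "\<dots> \<le> ennreal (cst x * norm (x - y) * S) * (ennreal (sqrt (m \<omega>)) * indicator {0..2*pi} \<omega>)"
      proof (cases "\<omega> \<in> {0..<2*pi}")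
        case True
        hence T2: "\<omega> \<in> {0..2*pi}" by auto
        have "(ennreal (cst x) * indicator {0..<2*pi} \<omega> * ennreal (norm (x - y))) * ennreal (S * sqrt (m \<omega>))
            = ennreal (cst x * norm (x - y) * (S * sqrt (m \<omega>)))"
          using True c0 S0 mpos[of \<omega>] by (simp add: ennreal_mult[symmetric])
        also have "\<dots> = ennreal (cst x * norm (x - y) * S) * (ennreal (sqrt (m \<omega>)) * indicator {0..2*pi} \<omega>)"
          using T2 c0 S0 mpos[of \<omega>] by (simp add: ennreal_mult[symmetric] mult_ac)
        finally show ?thesis by simp
      qed simp
      finally show "(\<integral>\<^sup>+ z. ennreal (cst x) * indicator {0..<2*pi} \<omega> * ennreal (norm (P1 (z, \<omega>) - P2 (z, \<omega>))) \<partial>surf x)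
          \<le> ennreal (cst x * norm (x - y) * S) * (ennreal (sqrt (m \<omega>)) * indicator {0..2*pi} \<omega>)" .
    qed
    also have "\<dots> = ennreal (cst x * norm (x - y) * S) * (\<integral>\<^sup>+ \<omega>. ennreal (sqrt (m \<omega>)) * indicator {0..2*pi} \<omega> \<partial>lborel)"
      by (rule nn_integral_cmult) (simp add: m_def)
    also have "(\<integral>\<^sup>+ \<omega>. ennreal (sqrt (m \<omega>)) * indicator {0..2*pi} \<omega> \<partial>lborel) = ennreal (integral {0..2*pi} (\<lambda>\<omega>. sqrt (m \<omega>)))"
    proof (rule nn_integral_has_integral_lebesgue')
      show "((\<lambda>\<omega>. sqrt (m \<omega>)) has_integral integral {0..2*pi} (\<lambda>\<omega>. sqrt (m \<omega>))) {0..2*pi}"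
        by (rule integrable_integral, rule integrable_continuous_interval)
           (use dd in \<open>auto simp: m_def intro!: continuous_intros\<close>)
    qed (use mpos in \<open>simp add: less_imp_le\<close>)
    also have "ennreal (cst x * norm (x - y) * S) * ennreal (integral {0..2*pi} (\<lambda>\<omega>. sqrt (m \<omega>)))
        = ennreal (norm (x - y) * ((1 / (2 * pi)) * I))"
    proof -
      have Inn: "0 \<le> I" unfolding I_def
        by (rule integral_nonneg, rule integrable_continuous_interval)
           (use dd mpos in \<open>auto simp: m_def intro!: continuous_intros\<close>)
      have cS: "cst x * S = 1 / (2 * pi)" using \<open>S > 0\<close> by (simp add: cst_def S_def)
      have "ennreal (cst x * norm (x - y) * S) * ennreal I = ennreal (cst x * norm (x - y) * S * I)"
        using Inn c0 S0 by (simp add: ennreal_mult[symmetric])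
      also have "cst x * norm (x - y) * S * I = norm (x - y) * ((cst x * S) * I)" by (simp add: mult_ac)
      finally show ?thesis unfolding cS I_def .
    qed
    finally show ?thesis .
  qed
  finally show ?thesis by (simp add: I_def m_def[abs_def])
qed

theorem theorem1:
  assumes "DIM('a::euclidean_space) \<ge> 3"
  shows "wass_contractive (GSS :: 'a \<Rightarrow> 'a measure)
    ((1 / (2 * pi)) * integral {0..2*pi}
       (\<lambda>\<omega>. sqrt ((cos \<omega>)\<^sup>2 + (sin \<omega>)\<^sup>2 / (real DIM('a) - 1))))"
proof -
  define \<rho> where "\<rho> = (1 / (2 * pi)) * integral {0..2*pi}
       (\<lambda>\<omega>. sqrt ((cos \<omega>)\<^sup>2 + (sin \<omega>)\<^sup>2 / (real DIM('a) - 1)))"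
  have d2: "DIM('a) \<ge> 2" using assms by simp
  have dd: "real DIM('a) - 1 > 0" using d2 by simp
  have r1: "\<rho> < 1" using rho_lt1[of "real DIM('a)"] assms by (simp add: \<rho>_def)
  have r0: "0 \<le> \<rho>"
  proof -
    have "0 \<le> integral {0..2*pi} (\<lambda>\<omega>. sqrt ((cos \<omega>)\<^sup>2 + (sin \<omega>)\<^sup>2 / (real DIM('a) - 1)))"
      by (rule integral_nonneg, rule integrable_continuous_interval)
         (use dd in \<open>auto intro!: continuous_intros\<close>)
    thus ?thesis by (simp add: \<rho>_def)
  qed
  have "Dob (GSS :: 'a \<Rightarrow> 'a measure) \<le> ennreal \<rho>"
    unfolding Dob_def
  proof (rule SUP_least)
    fix p :: "'a \<times> 'a" assume "p \<in> {(x, y). x \<in> Sph \<and> y \<in> Sph \<and> x \<noteq> y}"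
    then obtain x y where p: "p = (x, y)" and x: "norm x = 1" and y: "norm y = 1" and xy: "x \<noteq> y"
      by auto
    have dpos: "0 < norm (x - y)" using xy by simp
    have "wass (GSS x) (GSS y) \<le> ennreal (norm (x - y) * \<rho>)"
      using main_bound[OF x y xy d2] by (simp add: \<rho>_def)
    hence "wass (GSS x) (GSS y) / ennreal (norm (x - y)) \<le> ennreal (norm (x - y) * \<rho>) / ennreal (norm (x - y))"
      by (rule divide_right_mono_ennreal)
    also have "\<dots> = ennreal (norm (x - y) * \<rho> / norm (x - y))"
      using r0 dpos by (simp add: divide_ennreal)
    also have "\<dots> = ennreal \<rho>" using dpos by simp
    finally show "(case p of (x, y) \<Rightarrow> wass (GSS x) (GSS y) / ennreal (norm (x - y))) \<le> ennreal \<rho>"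
      by (simp add: p)
  qed
  thus ?thesis unfolding wass_contractive_def using r1 by (simp add: \<rho>_def)
qed

end
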